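(* Let $m$ be an integer. (i) If $3m=N_1(\delta(1-x)+9A+9B(x-1))$ for some integers $A,B$ with $3\nmid A$, where $\delta=1,2,4$ according as $m\equiv 1,4,7\pmod 9$, then there is $F\in\mathbb Z[x]$ with $F(1)=9$, $N_1(F)=3m$, $N_2(F)=N_3(F)=3$ and $M_{27}(F)=3^5m$. (ii) If $m=N_2(1+(x-1)^7t(x))$ for some $t\in\mathbb Z[x]$ with $3\nmid t(1)$, then there is $F\in\mathbb Z[x]$ with $F(1)=9$, $N_2(F)=3m$, $N_1(F)=N_3(F)=3$ and $M_{27}(F)=3^5m$. (iii) If $m=N_3(1+(x-1)^7t(x))$ for some $t\in\mathbb Z[x]$ with $3\nmid t(1)$, then there is $F\in\mathbb Z[x]$ with $F(1)=9$, $N_3(F)=3m$, $N_1(F)=N_2(F)=3$ and $M_{27}(F)=3^5m$.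
   Context: $M_{27}(F)=\prod_{z^{27}=1}F(z)$. For $k\geq1$, $\omega_k=e^{2\pi i/3^k}$ and $N_k(F)=\prod_{1\leq \ell\leq 3^k,\ 3\nmid \ell}F(\omega_k^\ell)$. *)

theory Defs
  imports "HOL-Complex_Analysis.Complex_Analysis" "HOL-Computational_Algebra.Polynomial"
begin

definition cpoly :: "int poly \<Rightarrow> complex \<Rightarrow> complex" where
  "cpoly F z = poly (map_poly of_int F) z"

definition M27 :: "int poly \<Rightarrow> complex" where
  "M27 F = (\<Prod>z\<in>{z::complex. z ^ 27 = 1}. cpoly F z)"

definition omega :: "nat \<Rightarrow> complex" where
  "omega k = exp (2 * pi * \<i> / of_nat (3 ^ k))"

definition Nk :: "nat \<Rightarrow> int poly \<Rightarrow> complex" where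
  "Nk k F = (\<Prod>l\<in>{l::nat. 1 \<le> l \<and> l \<le> 3 ^ k \<and> \<not> 3 dvd l}. cpoly F (omega k ^ l))"

end

theory Submission
  imports Defs "HOL-Computational_Algebra.Fundamental_Theorem_Algebra"
begin


definition Rk :: "nat \<Rightarrow> complex set" where
  "Rk k = {z. z^(3^k) = 1 \<and> z^(3^(k-1)) \<noteq> 1}"
definition Sk :: "nat \<Rightarrow> nat set" where
  "Sk k = {l. 1 \<le> l \<and> l \<le> 3^k \<and> \<not> 3 dvd l}"

lemma omega_pow: "omega k ^ l = exp(2 * of_real pi * \<i> * of_nat l / of_nat (3^k))"
  unfolding omega_def exp_of_nat_mult[symmetric] by (simp add: field_simps)

lemma bij_S_R:
  assumes k: "k \<ge> 1"
  shows "bij_betw (\<lambda>l. omega k ^ l) (Sk k) (Rk k)"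
proof -
  define n where "n = (3::nat)^k"
  have n1: "1 \<le> n" unfolding n_def by simp
  have nk: "n = 3 * 3^(k-1)" unfolding n_def using k by (cases k) auto
  have e: "omega k ^ l = exp(2 * of_real pi * \<i> * of_nat l / of_nat n)" for l
    unfolding n_def by (rule omega_pow)
  have pw: "(omega k ^ l) ^ j = exp(2 * of_real pi * \<i> * of_nat (l*j) / of_nat n)" for l j
    by (subst power_mult[symmetric]) (rule e)
  have one: "(omega k ^ l) ^ j = 1 \<longleftrightarrow> n dvd l * j" for l j
    unfolding pw by (rule complex_root_unity_eq_1[OF n1])
  have dvdiff: "n dvd l * 3^(k-1) \<longleftrightarrow> 3 dvd l" for l
    unfolding nk by (simp add: mult.commute)
  show ?thesis unfolding bij_betw_def
  proof (intro conjI)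
    show "inj_on (\<lambda>l. omega k ^ l) (Sk k)"
    proof (rule inj_onI)
      fix a b assume a: "a \<in> Sk k" and b: "b \<in> Sk k" and eq: "omega k ^ a = omega k ^ b"
      from eq have "a mod n = b mod n" unfolding e using complex_root_unity_eq[OF n1] by simp
      moreover have "a < n" using a nk unfolding Sk_def n_def
        by (metis (mono_tags, lifting) dvd_triv_left le_neq_implies_less mem_Collect_eq)
      moreover have "b < n" using b nk unfolding Sk_def n_def
        by (metis (mono_tags, lifting) dvd_triv_left le_neq_implies_less mem_Collect_eq)
      ultimately show "a = b" by simp
    qed
    show "(\<lambda>l. omega k ^ l) ` Sk k = Rk k"
    proof
      show "(\<lambda>l. omega k ^ l) ` Sk k \<subseteq> Rk k"
      proof
        fix z assume "z \<in> (\<lambda>l. omega k ^ l) ` Sk k"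
        then obtain l where l: "l \<in> Sk k" and z: "z = omega k ^ l" by auto
        have "z ^ n = 1" unfolding z one by simp
        moreover have "z ^ (3^(k-1)) \<noteq> 1" unfolding z one dvdiff using l Sk_def by auto
        ultimately show "z \<in> Rk k" unfolding Rk_def n_def by auto
      qed
      show "Rk k \<subseteq> (\<lambda>l. omega k ^ l) ` Sk k"
      proof
        fix z assume z: "z \<in> Rk k"
        then have "z \<in> {z. z^n = 1}" unfolding Rk_def n_def by auto
        then obtain j where j: "j < n" and zj: "z = exp(2 * of_real pi * \<i> * of_nat j / of_nat n)"
          unfolding complex_roots_unity[OF n1] by auto
        have zj': "z = omega k ^ j" using zj e by simp
        have "(omega k ^ j) ^ (3^(k-1)) \<noteq> 1" using z unfolding Rk_def zj' by auto
        then have "\<not> 3 dvd j" unfolding one dvdiff .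
        then have "j \<noteq> 0" by (metis dvd_0_right)
        with j \<open>\<not> 3 dvd j\<close> have "j \<in> Sk k" unfolding Sk_def n_def by auto
        then show "z \<in> (\<lambda>l. omega k ^ l) ` Sk k" using zj' by auto
      qed
    qed
  qed
qed


lemma roots_prod:
  assumes n: "n \<ge> 1"
  shows "(\<Prod>z\<in>{z::complex. z^n = 1}. [:-z,1:]) = monom 1 n - 1"
proof -
  define p :: "complex poly" where "p = monom 1 n - 1"
  have pz: "poly p z = z^n - 1" for z unfolding p_def by (simp add: poly_monom)
  have dp: "pderiv p = monom (of_nat n) (n-1)" unfolding p_def
    by (simp add: pderiv_diff pderiv_monom)
  have rs: "rsquarefree p" unfolding rsquarefree_roots
  proof (intro allI notI)
    fix a assume "poly p a = 0 \<and> poly (pderiv p) a = 0"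
    then have a1: "a^n = 1" and a2: "of_nat n * a^(n-1) = 0" using pz dp by (auto simp: poly_monom)
    from a2 n have "a = 0" by auto
    with a1 n show False by (cases n) auto
  qed
  have deg: "degree p = n"
  proof -
    have "degree (monom (1::complex) n + - 1) = n" using n
      by (subst degree_add_eq_left) (simp_all add: degree_monom_eq)
    then show ?thesis by (simp add: p_def)
  qed
  have lc: "lead_coeff p = 1"
  proof -
    have "lead_coeff p = coeff p n" by (simp add: deg)
    also have "\<dots> = 1" unfolding p_def using n by (simp add: coeff_monom)
    finally show ?thesis .
  qed
  have "smult (lead_coeff p) (\<Prod>z|poly p z = 0. [:-z, 1:]) = p"
    by (rule complex_poly_decompose_rsquarefree[OF rs])
  then have "(\<Prod>z|poly p z = 0. [:-z, 1:]) = p" using lc by simp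
  moreover have "{z. poly p z = 0} = {z. z^n = 1}" by (auto simp: pz)
  ultimately show ?thesis unfolding p_def by simp
qed

lemma Rk_prod_poly:
  assumes k: "k \<ge> 1"
  shows "(\<Prod>z\<in>Rk k. [:-z,1:]) = 1 + monom 1 (3^(k-1)) + monom (1::complex) (2*3^(k-1))"
proof -
  define m where "m = (3::nat)^(k-1)"
  have m1: "m \<ge> 1" unfolding m_def by simp
  have km: "(3::nat)^k = 3*m" unfolding m_def using k by (cases k) auto
  have p3: "(x^3)^m = (x^m)^3" for x :: complex by (simp add: power_mult[symmetric] mult.commute)
  have split: "{z::complex. z^(3*m) = 1} = Rk k \<union> {z. z^m = 1}"
    unfolding Rk_def km m_def[symmetric] by (auto simp: power_mult p3)
  have disj: "Rk k \<inter> {z. z^m = 1} = {}" unfolding Rk_def m_def by auto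
  have fin1: "finite (Rk k)" unfolding Rk_def using finite_roots_unity[of "3^k"]
    by (intro finite_subset[OF _ finite_roots_unity[of "3^k"]]) auto
  have fin2: "finite {z::complex. z^m = 1}" using m1 by (intro finite_roots_unity) auto
  have "(\<Prod>z\<in>Rk k. [:-z,1:]) * (monom 1 m - 1) = monom 1 (3*m) - 1"
    using roots_prod[of m] roots_prod[of "3*m"] m1 unfolding split
    by (simp add: prod.union_disjoint[OF fin1 fin2 disj])
  also have "\<dots> = (monom 1 m - 1) * (1 + monom 1 m + monom 1 (2*m))"
  proof -
    have h1: "monom (1::complex) m * monom 1 m = monom 1 (2*m)" by (simp add: mult_monom mult_2)
    have h2: "monom (1::complex) m * monom 1 (2*m) = monom 1 (3*m)" by (simp add: mult_monom)
    show ?thesis by (simp add: ring_distribs h1 h2)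
  qed
  finally have eq: "(\<Prod>z\<in>Rk k. [:-z,1:]) * (monom 1 m - 1) = (1 + monom 1 m + monom 1 (2*m)) * (monom 1 m - 1)"
    by (simp add: mult.commute)
  have nz: "monom (1::complex) m - 1 \<noteq> 0"
  proof
    assume "monom (1::complex) m - 1 = 0"
    then have "poly (monom (1::complex) m - 1) 0 = 0" by simp
    with m1 show False by (cases m) (auto simp: poly_monom)
  qed
  from eq nz show ?thesis unfolding m_def by simp
qed

lemma Rk_prod:
  assumes k: "k \<ge> 1"
  shows "(\<Prod>z\<in>Rk k. (a - z)) = 1 + a^(3^(k-1)) + a^(2*3^(k-1))"
proof -
  have "poly (\<Prod>z\<in>Rk k. [:-z,1:]) a = 1 + a^(3^(k-1)) + a^(2*3^(k-1))"
    unfolding Rk_prod_poly[OF k] by (simp add: poly_monom)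
  then show ?thesis by (simp add: poly_prod)
qed

lemma Rk_finite: "finite (Rk k)"
  unfolding Rk_def by (intro finite_subset[OF _ finite_roots_unity[of "3^k"]]) auto

lemma Rk_card:
  assumes k: "k \<ge> 1"
  shows "card (Rk k) = 2*3^(k-1)"
proof -
  have "degree (\<Prod>z\<in>Rk k. [:-z,1:]) = (\<Sum>z\<in>Rk k. degree [:-z,1::complex:])"
    by (rule degree_prod_eq_sum_degree) auto
  also have "\<dots> = card (Rk k)" by simp
  finally have "card (Rk k) = degree (1 + monom 1 (3^(k-1)) + monom (1::complex) (2*3^(k-1)))"
    unfolding Rk_prod_poly[OF k] by simp
  also have "\<dots> = 2*3^(k-1)"
  proof (subst degree_add_eq_right)
    have "degree (1 + monom (1::complex) (3^(k-1))) \<le> 3^(k-1)"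
      by (rule degree_add_le) (simp_all add: degree_monom_eq)
    also have "\<dots> < 2*3^(k-1)" by simp
    finally show "degree (1 + monom (1::complex) (3^(k-1))) < degree (monom (1::complex) (2*3^(k-1)))"
      by (simp add: degree_monom_eq)
  qed (simp add: degree_monom_eq)
  finally show ?thesis .
qed

lemma Nk_Rk:
  assumes k: "k \<ge> 1"
  shows "Nk k F = (\<Prod>z\<in>Rk k. cpoly F z)"
  unfolding Nk_def Sk_def[symmetric]
  by (rule prod.reindex_bij_betw[OF bij_S_R[OF k]])

lemma R1: "Rk 1 = {z. z^3 = 1 \<and> z \<noteq> 1}" unfolding Rk_def by simp
lemma R2: "Rk 2 = {z. z^9 = 1 \<and> z^3 \<noteq> 1}" unfolding Rk_def by simp
lemma R3: "Rk 3 = {z. z^27 = 1 \<and> z^9 \<noteq> 1}" unfolding Rk_def by simp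


lemma M27_Rk: "M27 F = cpoly F 1 * Nk 1 F * Nk 2 F * Nk 3 F"
proof -
  have a: "z^27 = 1" if "z^9 = (1::complex)" for z
  proof -
    have "z^27 = (z^9)^3" by (simp add: power_mult[symmetric])
    then show ?thesis using that by simp
  qed
  have b: "z^9 = 1" if "z^3 = (1::complex)" for z
  proof -
    have "z^9 = (z^3)^3" by (simp add: power_mult[symmetric])
    then show ?thesis using that by simp
  qed
  have U: "{z::complex. z^27 = 1} = (({1} \<union> Rk 1) \<union> Rk 2) \<union> Rk 3"
    unfolding R1 R2 R3 using a b by auto
  have f: "finite (Rk k)" for k by (rule Rk_finite)
  have d1: "{1} \<inter> Rk 1 = {}" unfolding R1 by auto
  have d2: "({1} \<union> Rk 1) \<inter> Rk 2 = {}" unfolding R1 R2 by auto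
  have d3: "(({1} \<union> Rk 1) \<union> Rk 2) \<inter> Rk 3 = {}" unfolding R1 R2 R3 using b by auto
  have "M27 F = (\<Prod>z\<in>({1} \<union> Rk 1) \<union> Rk 2. cpoly F z) * (\<Prod>z\<in>Rk 3. cpoly F z)"
    unfolding M27_def U by (rule prod.union_disjoint[OF _ _ d3]) (simp_all add: f)
  also have "(\<Prod>z\<in>({1} \<union> Rk 1) \<union> Rk 2. cpoly F z) = (\<Prod>z\<in>{1} \<union> Rk 1. cpoly F z) * (\<Prod>z\<in>Rk 2. cpoly F z)"
    by (rule prod.union_disjoint[OF _ _ d2]) (simp_all add: f)
  also have "(\<Prod>z\<in>{1} \<union> Rk 1. cpoly F z) = (\<Prod>z\<in>{1}. cpoly F z) * (\<Prod>z\<in>Rk 1. cpoly F z)"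
    by (rule prod.union_disjoint[OF _ _ d1]) (simp_all add: f)
  finally show ?thesis by (simp add: Nk_Rk)
qed


lemma mp_add: "map_poly (of_int :: int \<Rightarrow> complex) (p + q) = map_poly of_int p + map_poly of_int q"
  by (rule poly_eqI) (simp add: coeff_map_poly)
lemma mp_diff: "map_poly (of_int :: int \<Rightarrow> complex) (p - q) = map_poly of_int p - map_poly of_int q"
  by (rule poly_eqI) (simp add: coeff_map_poly)
lemma mp_uminus: "map_poly (of_int :: int \<Rightarrow> complex) (- p) = - map_poly of_int p"
  by (rule poly_eqI) (simp add: coeff_map_poly)
lemma mp_mult: "map_poly (of_int :: int \<Rightarrow> complex) (p * q) = map_poly of_int p * map_poly of_int q"
  by (rule poly_eqI) (simp add: coeff_map_poly coeff_mult)
lemma mp_1: "map_poly (of_int :: int \<Rightarrow> complex) 1 = 1"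
  by (rule poly_eqI) (simp add: coeff_map_poly coeff_1)

lemma cpoly_add [simp]: "cpoly (p + q) z = cpoly p z + cpoly q z"
  unfolding cpoly_def mp_add by simp
lemma cpoly_diff [simp]: "cpoly (p - q) z = cpoly p z - cpoly q z"
  unfolding cpoly_def mp_diff by simp
lemma cpoly_uminus [simp]: "cpoly (- p) z = - cpoly p z"
  unfolding cpoly_def mp_uminus by simp
lemma cpoly_mult [simp]: "cpoly (p * q) z = cpoly p z * cpoly q z"
  unfolding cpoly_def mp_mult by simp
lemma cpoly_1 [simp]: "cpoly 1 z = 1"
  unfolding cpoly_def mp_1 by simp
lemma cpoly_0 [simp]: "cpoly 0 z = 0"
  unfolding cpoly_def by simp
lemma cpoly_pCons [simp]: "cpoly (pCons a p) z = of_int a + z * cpoly p z"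
  unfolding cpoly_def by (simp add: map_poly_pCons)
lemma cpoly_smult [simp]: "cpoly (smult a p) z = of_int a * cpoly p z"
  unfolding cpoly_def by (simp add: map_poly_smult)
lemma cpoly_power [simp]: "cpoly (p ^ n) z = cpoly p z ^ n"
  by (induction n) simp_all
lemma mp_monom: "map_poly (of_int :: int \<Rightarrow> complex) (monom a n) = monom (of_int a) n"
  by (rule poly_eqI) (simp add: coeff_map_poly coeff_monom)
lemma cpoly_monom [simp]: "cpoly (monom a n) z = of_int a * z ^ n"
  unfolding cpoly_def mp_monom by (simp add: poly_monom)

lemma cpoly_at1: "cpoly F 1 = of_int (poly F 1)"
  by (induction F rule: pCons_induct) simp_all

lemma cube_root: "y^3 = (1::complex) \<Longrightarrow> y \<noteq> 1 \<Longrightarrow> 1 + y + y^2 = 0"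
proof -
  assume "y^3 = 1" "y \<noteq> 1"
  then have "(y - 1) * (1 + y + y^2) = 0" by (simp add: algebra_simps power2_eq_square power3_eq_cube)
  with \<open>y \<noteq> 1\<close> show ?thesis by simp
qed

lemma Rk1_root: "z \<in> Rk 1 \<Longrightarrow> 1 + z + z^2 = 0 \<and> z^3 = 1"
  unfolding R1 using cube_root by auto
lemma Rk2_root: "z \<in> Rk 2 \<Longrightarrow> 1 + z^3 + z^6 = 0 \<and> z^9 = 1"
proof -
  assume "z \<in> Rk 2"
  then have "(z^3)^3 = 1" "z^3 \<noteq> 1" "z^9 = 1" unfolding R2 by (auto simp: power_mult[symmetric])
  then show ?thesis using cube_root[of "z^3"] by (simp add: power_mult[symmetric])
qed
lemma Rk3_root: "z \<in> Rk 3 \<Longrightarrow> 1 + z^9 + z^18 = 0 \<and> z^27 = 1"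
proof -
  assume "z \<in> Rk 3"
  then have "(z^9)^3 = 1" "z^9 \<noteq> 1" "z^27 = 1" unfolding R3 by (auto simp: power_mult[symmetric])
  then show ?thesis using cube_root[of "z^9"] by (simp add: power_mult[symmetric])
qed

lemma N_lin:
  assumes k: "k \<ge> 1" and c: "c^2 = (1::complex)"
    and h: "\<And>z. z \<in> Rk k \<Longrightarrow> cpoly F z = c * (1 - z) * X z"
  shows "Nk k F = 3 * (\<Prod>z\<in>Rk k. X z)"
proof -
  have "Nk k F = (\<Prod>z\<in>Rk k. c * (1 - z) * X z)" unfolding Nk_Rk[OF k] by (rule prod.cong) (simp_all add: h)
  also have "\<dots> = c ^ card (Rk k) * (\<Prod>z\<in>Rk k. (1 - z)) * (\<Prod>z\<in>Rk k. X z)"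
    by (simp add: prod.distrib)
  also have "c ^ card (Rk k) = 1" unfolding Rk_card[OF k]
    by (simp add: power_mult c)
  also have "(\<Prod>z\<in>Rk k. (1 - z)) = 3" unfolding Rk_prod[OF k] by simp
  finally show ?thesis by simp
qed

lemma test_id: "1 + z^3 + z^6 = (0::complex) \<Longrightarrow> 3*(1+z+z^2)*(-12*z + 21*z^2 - 28*z^3 + 21*z^4 - 12*z^5) = (z-1)^8"
  by algebra


definition P3 :: "int poly" where "P3 = [:1,1,1:]"
definition P9 :: "int poly" where "P9 = [:1,0,0,1,0,0,1:]"
definition P27 :: "int poly" where "P27 = monom 1 18 + monom 1 9 + 1"

lemma cP3 [simp]: "cpoly P3 z = 1 + z + z^2" unfolding P3_def by (simp add: algebra_simps power2_eq_square)
lemma cP9 [simp]: "cpoly P9 z = 1 + z^3 + z^6" unfolding P9_def by (simp add: algebra_simps eval_nat_numeral)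
lemma cP27 [simp]: "cpoly P27 z = 1 + z^9 + z^18" unfolding P27_def by (simp add: algebra_simps)
lemma pP3 [simp]: "poly P3 1 = 3" unfolding P3_def by simp
lemma pP9 [simp]: "poly P9 1 = 3" unfolding P9_def by simp
lemma pP27 [simp]: "poly P27 1 = 3" unfolding P27_def by (simp add: poly_monom)

lemma sign_choice:
  fixes a :: int
  assumes "\<not> 3 dvd a"
  obtains e :: int where "e = 1 \<or> e = -1" "3 dvd a - e"
proof -
  have "a mod 3 = 1 \<or> a mod 3 = 2" using assms by presburger
  then show ?thesis
  proof
    assume "a mod 3 = 1" then have "3 dvd a - 1" by presburger
    then show ?thesis using that by auto
  next
    assume "a mod 3 = 2" then have "3 dvd a - (-1)" by presburger
    then show ?thesis using that[of "-1"] by simp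
  qed
qed

lemma e_sq: "(e::int) = 1 \<or> e = -1 \<Longrightarrow> (of_int e :: complex)^2 = 1"
  by auto

lemma part2:
  fixes m :: int and t :: "int poly"
  assumes t1: "\<not> 3 dvd poly t 1" and hm: "of_int m = Nk 2 (1 + [:-1, 1:] ^ 7 * t)"
  shows "\<exists>F :: int poly. poly F 1 = 9 \<and> Nk 2 F = of_int (3 * m) \<and>
              Nk 1 F = 3 \<and> Nk 3 F = 3 \<and> M27 F = of_int (3 ^ 5 * m)"
proof -
  obtain e :: int where e: "e = 1 \<or> e = -1" and ed: "3 dvd poly t 1 - e"
    using sign_choice[OF t1] by blast
  define h where "h = (1 - 10 * e * poly t 1) div 3"
  have h3: "3 * h = 1 - 10 * e * poly t 1"
  proof -
    obtain j where j: "poly t 1 = e + 3 * j" using ed by (metis dvd_def eq_diff_eq add.commute)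
    have "1 - 10 * e * poly t 1 = 3 * (-3 - 10 * e * j)" using e unfolding j by (auto simp: algebra_simps)
    then have d: "3 dvd (1 - 10 * e * poly t 1)" by (metis dvd_triv_left)
    show ?thesis unfolding h_def by (rule dvd_mult_div_cancel[OF d])
  qed
  define w :: "int poly" where "w = [:0,-12,21,-28,21,-12:]"
  have cw: "cpoly w z = -12*z + 21*z^2 - 28*z^3 + 21*z^4 - 12*z^5" for z
    unfolding w_def by (simp add: algebra_simps eval_nat_numeral)
  have pw: "poly w 1 = -10" unfolding w_def by simp
  have wid: "3*(1+z+z^2)*(-12*z + 21*z^2 - 28*z^3 + 21*z^4 - 12*z^5) = (z-1)^8"
    if "1 + z^3 + z^6 = (0::complex)" for z
    using that by algebra
  define F where "F = smult e [:1,-1:] + P3 * P27 * (smult (-e) (w * t) + [:h:] * P9)"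
  have ee: "(of_int e :: complex)^2 = 1" using e by auto
  have F1: "poly F 1 = 9"
  proof -
    have "poly F 1 = 9 * (10 * e * poly t 1 + 3 * h)" unfolding F_def by (simp add: pw algebra_simps)
    also have "\<dots> = 9" using h3 by simp
    finally show ?thesis .
  qed
  have N1: "Nk 1 F = 3"
  proof -
    have "Nk 1 F = 3 * (\<Prod>z\<in>Rk 1. 1)"
    proof (rule N_lin[OF _ ee])
      fix z assume "z \<in> Rk 1"
      then have "1 + z + z^2 = 0" by (rule Rk1_root[THEN conjunct1])
      then show "cpoly F z = of_int e * (1 - z) * 1" by (simp add: F_def) (simp add: algebra_simps)
    qed simp
    then show ?thesis by simp
  qed
  have N3: "Nk 3 F = 3"
  proof -
    have "Nk 3 F = 3 * (\<Prod>z\<in>Rk 3. 1)"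
    proof (rule N_lin[OF _ ee])
      fix z assume "z \<in> Rk 3"
      then have "1 + z^9 + z^18 = 0" by (rule Rk3_root[THEN conjunct1])
      then show "cpoly F z = of_int e * (1 - z) * 1" by (simp add: F_def) (simp add: algebra_simps)
    qed simp
    then show ?thesis by simp
  qed
  have N2: "Nk 2 F = of_int (3 * m)"
  proof -
    have "Nk 2 F = 3 * (\<Prod>z\<in>Rk 2. cpoly (1 + [:-1, 1:] ^ 7 * t) z)"
    proof (rule N_lin[OF _ ee])
      fix z assume "z \<in> Rk 2"
      then have r: "1 + z^3 + z^6 = 0" "z^9 = 1" by (auto dest: Rk2_root)
      have "z^18 = (z^9)^2" by (simp add: power_mult[symmetric])
      then have z18: "z^18 = 1" using r(2) by simp
      have "cpoly F z = of_int e * (1 - z) - of_int e * (3*(1+z+z^2)*(-12*z + 21*z^2 - 28*z^3 + 21*z^4 - 12*z^5)) * cpoly t z"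
        unfolding F_def using r z18 by (simp add: cw algebra_simps)
      also have "\<dots> = of_int e * (1 - z) - of_int e * (z-1)^8 * cpoly t z" using wid[OF r(1)] by simp
      also have "\<dots> = of_int e * (1 - z) * cpoly (1 + [:-1, 1:] ^ 7 * t) z"
      proof -
        have "(z-1)^8 = (z-1)^(7+1)" by simp
        then have p8: "(z-1)^8 = (z-1)^7 * (z-1)" by (simp only: power_add power_one_right)
        show ?thesis by (simp add: p8 algebra_simps)
      qed
      finally show "cpoly F z = of_int e * (1 - z) * cpoly (1 + [:-1, 1:] ^ 7 * t) z" .
    qed simp
    then show ?thesis using hm unfolding Nk_Rk[of 2, simplified] by simp
  qed
  have "M27 F = of_int (3 ^ 5 * m)" unfolding M27_Rk cpoly_at1 F1 N1 N2 N3
    by simp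
  show ?thesis using F1 N1 N2 N3 \<open>M27 F = _\<close> by blast
qed


lemma part3:
  fixes m :: int and t :: "int poly"
  assumes t1: "\<not> 3 dvd poly t 1" and hm: "of_int m = Nk 3 (1 + [:-1, 1:] ^ 7 * t)"
  shows "\<exists>F :: int poly. poly F 1 = 9 \<and> Nk 3 F = of_int (3 * m) \<and>
              Nk 1 F = 3 \<and> Nk 2 F = 3 \<and> M27 F = of_int (3 ^ 5 * m)"
proof -
  obtain e0 :: int where e0: "e0 = 1 \<or> e0 = -1" and ed: "3 dvd poly t 1 - e0"
    using sign_choice[OF t1] by blast
  define e where "e = - e0"
  have e: "e = 1 \<or> e = -1" using e0 unfolding e_def by auto
  obtain j where j: "poly t 1 = e0 + 3 * j" using ed by (metis dvd_def eq_diff_eq add.commute)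
  define h where "h = e * j"
  have h3: "3 * h = 1 + e * poly t 1" unfolding h_def e_def j using e0 by (auto simp: algebra_simps)
  define w :: "int poly" where "w = [:1,-6,24,-56,84,-84,56,-24,6,0,-3,12,-28,42,-42,28,-12,3:]"
  define wz where "wz = (\<lambda>z::complex. 1 - 6*z + 24*z^2 - 56*z^3 + 84*z^4 - 84*z^5 + 56*z^6 - 24*z^7 + 6*z^8
     - 3*z^10 + 12*z^11 - 28*z^12 + 42*z^13 - 42*z^14 + 28*z^15 - 12*z^16 + 3*z^17)"
  have cw: "cpoly w z = wz z" for z
    unfolding w_def wz_def by (simp add: algebra_simps eval_nat_numeral)
  have pw: "poly w 1 = 1" unfolding w_def by simp
  have wid0: "(1+z+z^2)*(1+z^3+z^6)*wz z - (z-1)^8 = (1+z^9+z^18)*(3*z - 9*z^2 + 19*z^3 - 23*z^4 + 19*z^5 - 9*z^6 + 3*z^7)"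
    for z :: complex
    unfolding wz_def by (simp add: algebra_simps eval_nat_numeral)
  have wid: "(1+z+z^2)*(1+z^3+z^6)*wz z = (z-1)^8"
    if "1 + z^9 + z^18 = (0::complex)" for z
    using wid0[of z] that by simp
  define F where "F = smult e [:1,-1:] + P3 * P9 * (smult (-e) (w * t) + [:h:] * P27)"
  have ee: "(of_int e :: complex)^2 = 1" using e by auto
  have F1: "poly F 1 = 9"
  proof -
    have "poly F 1 = 9 * (- e * poly t 1 + 3 * h)" unfolding F_def by (simp add: pw algebra_simps)
    also have "\<dots> = 9" using h3 by simp
    finally show ?thesis .
  qed
  have N1: "Nk 1 F = 3"
  proof -
    have "Nk 1 F = 3 * (\<Prod>z\<in>Rk 1. 1)"
    proof (rule N_lin[OF _ ee])
      fix z assume "z \<in> Rk 1"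
      then have "1 + z + z^2 = 0" by (rule Rk1_root[THEN conjunct1])
      then show "cpoly F z = of_int e * (1 - z) * 1" by (simp add: F_def) (simp add: algebra_simps)
    qed simp
    then show ?thesis by simp
  qed
  have N2: "Nk 2 F = 3"
  proof -
    have "Nk 2 F = 3 * (\<Prod>z\<in>Rk 2. 1)"
    proof (rule N_lin[OF _ ee])
      fix z assume "z \<in> Rk 2"
      then have "1 + z^3 + z^6 = 0" by (rule Rk2_root[THEN conjunct1])
      then show "cpoly F z = of_int e * (1 - z) * 1" by (simp add: F_def) (simp add: algebra_simps)
    qed simp
    then show ?thesis by simp
  qed
  have N3: "Nk 3 F = of_int (3 * m)"
  proof -
    have "Nk 3 F = 3 * (\<Prod>z\<in>Rk 3. cpoly (1 + [:-1, 1:] ^ 7 * t) z)"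
    proof (rule N_lin[OF _ ee])
      fix z assume "z \<in> Rk 3"
      then have r: "1 + z^9 + z^18 = 0" by (rule Rk3_root[THEN conjunct1])
      have "cpoly F z = of_int e * (1 - z) - of_int e * ((1+z+z^2)*(1+z^3+z^6)*wz z) * cpoly t z"
        unfolding F_def using r by (simp add: cw) (simp add: algebra_simps)
      also have "\<dots> = of_int e * (1 - z) - of_int e * (z-1)^8 * cpoly t z" using wid[OF r] by simp
      also have "\<dots> = of_int e * (1 - z) * cpoly (1 + [:-1, 1:] ^ 7 * t) z"
      proof -
        have "(z-1)^8 = (z-1)^(7+1)" by simp
        then have p8: "(z-1)^8 = (z-1)^7 * (z-1)" by (simp only: power_add power_one_right)
        show ?thesis by (simp add: p8 algebra_simps)
      qed
      finally show "cpoly F z = of_int e * (1 - z) * cpoly (1 + [:-1, 1:] ^ 7 * t) z" .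
    qed simp
    then show ?thesis using hm unfolding Nk_Rk[of 3, simplified] by simp
  qed
  have "M27 F = of_int (3 ^ 5 * m)" unfolding M27_Rk cpoly_at1 F1 N1 N2 N3
    by simp
  show ?thesis using F1 N1 N2 N3 \<open>M27 F = _\<close> by blast
qed


lemma N_scale:
  assumes k: "k \<ge> 1" and c: "c^2 = (1::complex)"
    and h: "\<And>z. z \<in> Rk k \<Longrightarrow> cpoly F z = c * cpoly G z"
  shows "Nk k F = Nk k G"
proof -
  have "Nk k F = (\<Prod>z\<in>Rk k. c * cpoly G z)" unfolding Nk_Rk[OF k] by (rule prod.cong) (simp_all add: h)
  also have "\<dots> = c ^ card (Rk k) * (\<Prod>z\<in>Rk k. cpoly G z)"
    by (simp add: prod.distrib)
  also have "c ^ card (Rk k) = 1" unfolding Rk_card[OF k]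
    by (simp add: power_mult c)
  finally show ?thesis unfolding Nk_Rk[OF k] by simp
qed

lemma g4_norm: "(\<Prod>z\<in>Rk 3. (1 + z + z^2 + z^3)) = 1"
proof -
  have "(\<Prod>z\<in>Rk 3. (1 + z + z^2 + z^3)) = (\<Prod>z\<in>Rk 3. (-1) * ((-1 - z) * ((\<i> - z) * (-\<i> - z))))"
    by (rule prod.cong) (simp_all add: algebra_simps power2_eq_square power3_eq_cube)
  also have "\<dots> = (-1) ^ card (Rk 3) * ((\<Prod>z\<in>Rk 3. (-1 - z)) * ((\<Prod>z\<in>Rk 3. (\<i> - z)) * (\<Prod>z\<in>Rk 3. (-\<i> - z))))"
    by (simp only: prod.distrib prod_constant)
  also have "\<dots> = 1"
    unfolding Rk_card[of 3, simplified] Rk_prod[of 3, simplified]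
    by (simp add: power_mult eval_nat_numeral)
  finally show ?thesis .
qed


lemma part1_gen:
  fixes m A B d s :: int and U y Kb :: "int poly"
  assumes s: "s = 1 \<or> s = -1"
  and hU: "(\<Prod>z\<in>Rk 3. cpoly U z) = 1"
  and hA: "\<And>z. 1 + z^3 + z^6 = 0 \<Longrightarrow> cpoly U z + 3 * cpoly y z = 1"
  and hB: "\<And>z. 1 + z + z^2 = 0 \<Longrightarrow>
     of_int s * (1 - z) * (cpoly U z + 3 * cpoly y z) + 9 * cpoly Kb z = of_int d * (1 - z) + 9"
  and hK: "poly Kb 1 = 1"
  and A: "\<not> 3 dvd A"
  and hm: "of_int (3*m) = Nk 1 ([:d, -d:] + [:9 * A:] + smult (9 * B) [:-1, 1:])"
  shows "\<exists>F :: int poly. poly F 1 = 9 \<and> Nk 1 F = of_int (3 * m) \<and>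
              Nk 2 F = 3 \<and> Nk 3 F = 3 \<and> M27 F = of_int (3 ^ 5 * m)"
proof -
  obtain n :: int where n: "n = 1 \<or> n = -1" and ed: "3 dvd A - n" using sign_choice[OF A] by blast
  obtain r where r: "A = n + 3*r" using ed by (metis dvd_def eq_diff_eq add.commute)
  define c where "c = n * s"
  have c: "c = 1 \<or> c = -1" using n s unfolding c_def by auto
  have cc: "(of_int c :: complex)^2 = 1" using c by auto
  have nn: "(of_int n :: complex)^2 = 1" using n by auto
  define V where "V = U + P27 * y"
  define K where "K = [:1 - n:] + smult n Kb + smult n (smult r [:2,-1,-1:] + smult B [:-1,1:])"
  define F where "F = smult c ([:1,-1:] * V) + P9 * P27 * K"
  have F1: "poly F 1 = 9"
    unfolding F_def K_def using hK by (simp add: algebra_simps)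
  have N1: "Nk 1 F = of_int (3 * m)"
  proof -
    have "Nk 1 F = Nk 1 ([:d, -d:] + [:9 * A:] + smult (9 * B) [:-1, 1:])"
    proof (rule N_scale[OF _ nn])
      fix z assume "z \<in> Rk 1"
      then have r1: "1 + z + z^2 = 0" and z3: "z^3 = 1" using Rk1_root by auto
      have "z^6 = (z^3)^2" by (simp add: power_mult[symmetric])
      then have z6: "z^6 = 1" using z3 by simp
      have "z^9 = (z^3)^3" by (simp add: power_mult[symmetric])
      then have z9: "z^9 = 1" using z3 by simp
      have "z^18 = (z^3)^6" by (simp add: power_mult[symmetric])
      then have z18: "z^18 = 1" using z3 by simp
      have c9: "cpoly P9 z = 3" using z3 z6 by simp
      have c27: "cpoly P27 z = 3" using z9 z18 by simp
      have zz: "2 - z - z^2 = 3" using r1 by (simp add: algebra_simps)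
      have "cpoly F z = of_int n * (of_int s * (1 - z) * (cpoly U z + 3 * cpoly y z) + 9 * cpoly Kb z)
          + 9 * (1 - of_int n) + 9 * of_int n * (of_int r * (2 - z - z^2) + of_int B * (z - 1))"
        unfolding F_def V_def K_def c_def using c9 c27 by (simp add: algebra_simps power2_eq_square del: cP9 cP27)
      also have "\<dots> = of_int n * (of_int d * (1 - z) + 9) + 9 * (1 - of_int n) + 9 * of_int n * (3 * of_int r + of_int B * (z - 1))"
        unfolding hB[OF r1] zz by simp
      also have "\<dots> = of_int n * cpoly ([:d, -d:] + [:9 * A:] + smult (9 * B) [:-1, 1:]) z"
        using n unfolding r by (auto simp: algebra_simps)
      finally show "cpoly F z = of_int n * cpoly ([:d, -d:] + [:9 * A:] + smult (9 * B) [:-1, 1:]) z" .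
    qed simp
    then show ?thesis using hm by simp
  qed
  have N2: "Nk 2 F = 3"
  proof -
    have "Nk 2 F = 3 * (\<Prod>z\<in>Rk 2. 1)"
    proof (rule N_lin[OF _ cc])
      fix z assume "z \<in> Rk 2"
      then have r2: "1 + z^3 + z^6 = 0" and z9: "z^9 = 1" using Rk2_root by auto
      have "z^18 = (z^9)^2" by (simp add: power_mult[symmetric])
      then have z18: "z^18 = 1" using z9 by simp
      have "cpoly F z = of_int c * (1 - z) * (cpoly U z + 3 * cpoly y z)"
        unfolding F_def V_def using r2 z9 z18 by simp (simp add: algebra_simps)
      also have "\<dots> = of_int c * (1 - z) * 1" using hA[OF r2] by simp
      finally show "cpoly F z = of_int c * (1 - z) * 1" .
    qed simp
    then show ?thesis by simp
  qed
  have N3: "Nk 3 F = 3"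
  proof -
    have "Nk 3 F = 3 * (\<Prod>z\<in>Rk 3. cpoly U z)"
    proof (rule N_lin[OF _ cc])
      fix z assume "z \<in> Rk 3"
      then have r3: "1 + z^9 + z^18 = 0" using Rk3_root by auto
      show "cpoly F z = of_int c * (1 - z) * cpoly U z"
        unfolding F_def V_def using r3 by simp (simp add: algebra_simps)
    qed simp
    then show ?thesis using hU by simp
  qed
  have "M27 F = of_int (3 ^ 5 * m)" unfolding M27_Rk cpoly_at1 F1 N1 N2 N3
    by simp
  show ?thesis using F1 N1 N2 N3 \<open>M27 F = _\<close> by blast
qed


definition g4 :: "int poly" where "g4 = [:1,1,1,1:]"
lemma cg4: "cpoly g4 z = 1 + z + z^2 + z^3"
  unfolding g4_def by (simp add: algebra_simps eval_nat_numeral)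

lemma part1_d1:
  assumes "\<not> 3 dvd A" and "of_int (3*m) = Nk 1 ([:1, -1:] + [:9 * A:] + smult (9 * B) [:-1, 1:])"
  shows "\<exists>F :: int poly. poly F 1 = 9 \<and> Nk 1 F = of_int (3 * m) \<and>
              Nk 2 F = 3 \<and> Nk 3 F = 3 \<and> M27 F = of_int (3 ^ 5 * m)"
  by (rule part1_gen[where s=1 and U=1 and y=0 and Kb=1 and d=1]) (use assms in simp_all)

lemma part1_d4:
  assumes "\<not> 3 dvd A" and "of_int (3*m) = Nk 1 ([:4, -4:] + [:9 * A:] + smult (9 * B) [:-1, 1:])"
  shows "\<exists>F :: int poly. poly F 1 = 9 \<and> Nk 1 F = of_int (3 * m) \<and>
              Nk 2 F = 3 \<and> Nk 3 F = 3 \<and> M27 F = of_int (3 ^ 5 * m)"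
proof (rule part1_gen[where s=1 and U="g4^3" and y="[:3,1,-1,0,-2,-3:]" and Kb="[:-1,1,1:]" and d=4])
  show "(\<Prod>z\<in>Rk 3. cpoly (g4^3) z) = 1"
    by (simp add: cg4 prod_power_distrib[symmetric] g4_norm)
  show "cpoly (g4^3) z + 3 * cpoly [:3,1,-1,0,-2,-3:] z = 1" if "1 + z^3 + z^6 = 0" for z
  proof -
    have "(1 + z + z^2 + z^3)^3 + 3 * (3 + z - z^2 - 2*z^4 - 3*z^5) = 1"
      using that by algebra
    then show ?thesis by (simp add: cg4 algebra_simps eval_nat_numeral)
  qed
  show "of_int 1 * (1 - z) * (cpoly (g4^3) z + 3 * cpoly [:3,1,-1,0,-2,-3:] z) + 9 * cpoly [:-1,1,1:] z
        = of_int 4 * (1 - z) + 9" if "1 + z + z^2 = 0" for z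
  proof -
    have "(1 - z) * ((1 + z + z^2 + z^3)^3 + 3 * (3 + z - z^2 - 2*z^4 - 3*z^5)) + 9 * (-1 + z + z^2) = 4 * (1 - z) + 9"
      using that by algebra
    then show ?thesis by (simp add: cg4 algebra_simps eval_nat_numeral)
  qed
qed (use assms in simp_all)

lemma part1_d2:
  assumes "\<not> 3 dvd A" and "of_int (3*m) = Nk 1 ([:2, -2:] + [:9 * A:] + smult (9 * B) [:-1, 1:])"
  shows "\<exists>F :: int poly. poly F 1 = 9 \<and> Nk 1 F = of_int (3 * m) \<and>
              Nk 2 F = 3 \<and> Nk 3 F = 3 \<and> M27 F = of_int (3 ^ 5 * m)"
proof (rule part1_gen[where s="-1" and U="g4^6" and y="[:-63,-25,25,0,47,72:]" and Kb="[:-52,28,25:]" and d=2])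
  show "(\<Prod>z\<in>Rk 3. cpoly (g4^6) z) = 1"
    by (simp add: cg4 prod_power_distrib[symmetric] g4_norm)
  show "cpoly (g4^6) z + 3 * cpoly [:-63,-25,25,0,47,72:] z = 1" if "1 + z^3 + z^6 = 0" for z
  proof -
    have "(1 + z + z^2 + z^3)^6 + 3 * (-63 - 25*z + 25*z^2 + 47*z^4 + 72*z^5) = 1"
      using that by algebra
    then show ?thesis by (simp add: cg4 algebra_simps eval_nat_numeral)
  qed
  show "of_int (-1) * (1 - z) * (cpoly (g4^6) z + 3 * cpoly [:-63,-25,25,0,47,72:] z) + 9 * cpoly [:-52,28,25:] z
        = of_int 2 * (1 - z) + 9" if "1 + z + z^2 = 0" for z
  proof -
    have "-(1 - z) * ((1 + z + z^2 + z^3)^6 + 3 * (-63 - 25*z + 25*z^2 + 47*z^4 + 72*z^5)) + 9 * (-52 + 28*z + 25*z^2) = 2 * (1 - z) + 9"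
      using that by algebra
    then show ?thesis by (simp add: cg4 algebra_simps eval_nat_numeral)
  qed
qed (use assms in simp_all)


theorem lemma4p6:
  fixes m :: int
  shows
  "(\<forall>(\<delta>::int) (A::int) (B::int).
      ((m mod 9 = 1 \<and> \<delta> = 1) \<or> (m mod 9 = 4 \<and> \<delta> = 2) \<or> (m mod 9 = 7 \<and> \<delta> = 4)) \<and>
      \<not> 3 dvd A \<and>
      of_int (3 * m) = Nk 1 ([:\<delta>, -\<delta>:] + [:9 * A:] + smult (9 * B) [:-1, 1:])
      \<longrightarrow> (\<exists>F :: int poly. poly F 1 = 9 \<and> Nk 1 F = of_int (3 * m) \<and>
              Nk 2 F = 3 \<and> Nk 3 F = 3 \<and> M27 F = of_int (3 ^ 5 * m)))
   \<and>
   (\<forall>t :: int poly.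
      \<not> 3 dvd poly t 1 \<and> of_int m = Nk 2 (1 + [:-1, 1:] ^ 7 * t)
      \<longrightarrow> (\<exists>F :: int poly. poly F 1 = 9 \<and> Nk 2 F = of_int (3 * m) \<and>
              Nk 1 F = 3 \<and> Nk 3 F = 3 \<and> M27 F = of_int (3 ^ 5 * m)))
   \<and>
   (\<forall>t :: int poly.
      \<not> 3 dvd poly t 1 \<and> of_int m = Nk 3 (1 + [:-1, 1:] ^ 7 * t)
      \<longrightarrow> (\<exists>F :: int poly. poly F 1 = 9 \<and> Nk 3 F = of_int (3 * m) \<and>
              Nk 1 F = 3 \<and> Nk 2 F = 3 \<and> M27 F = of_int (3 ^ 5 * m)))"
proof (intro conjI allI impI)
  fix d A B :: int
  assume H: "((m mod 9 = 1 \<and> d = 1) \<or> (m mod 9 = 4 \<and> d = 2) \<or> (m mod 9 = 7 \<and> d = 4)) \<and>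
      \<not> 3 dvd A \<and>
      of_int (3 * m) = Nk 1 ([:d, -d:] + [:9 * A:] + smult (9 * B) [:-1, 1:])"
  then have d: "d = 1 \<or> d = 2 \<or> d = 4" and A: "\<not> 3 dvd A"
    and hm: "of_int (3 * m) = Nk 1 ([:d, -d:] + [:9 * A:] + smult (9 * B) [:-1, 1:])" by auto
  from d show "\<exists>F :: int poly. poly F 1 = 9 \<and> Nk 1 F = of_int (3 * m) \<and>
              Nk 2 F = 3 \<and> Nk 3 F = 3 \<and> M27 F = of_int (3 ^ 5 * m)"
  proof (elim disjE)
    assume "d = 1" then show ?thesis using part1_d1[OF A] hm by simp
  next
    assume "d = 2" then show ?thesis using part1_d2[OF A] hm by simp
  next
    assume "d = 4" then show ?thesis using part1_d4[OF A] hm by simp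
  qed
next
  fix t :: "int poly"
  assume "\<not> 3 dvd poly t 1 \<and> of_int m = Nk 2 (1 + [:-1, 1:] ^ 7 * t)"
  then show "\<exists>F :: int poly. poly F 1 = 9 \<and> Nk 2 F = of_int (3 * m) \<and>
              Nk 1 F = 3 \<and> Nk 3 F = 3 \<and> M27 F = of_int (3 ^ 5 * m)"
    using part2 by blast
next
  fix t :: "int poly"
  assume "\<not> 3 dvd poly t 1 \<and> of_int m = Nk 3 (1 + [:-1, 1:] ^ 7 * t)"
  then show "\<exists>F :: int poly. poly F 1 = 9 \<and> Nk 3 F = of_int (3 * m) \<and>
              Nk 1 F = 3 \<and> Nk 2 F = 3 \<and> M27 F = of_int (3 ^ 5 * m)"
    using part3 by blast
qed

end
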